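(* Let $n\ge 1$ and $m\ge 2$ be integers with $m\nmid n$, let $\ell=\lfloor n/m\rfloor$, and let $f=\theta_{m,0}+\sum_{i=1}^{\ell}a_i\theta_{m,i}$ with $a_i\in\mathbb{F}_2$. Then the compositional inverse of $f$ is $f^{-1}=\theta_{m,0}+\sum_{j=1}^{\ell}b_j\theta_{m,j}$, where $b_1=a_1$ and, for $j\in\{2,3,\dots,\ell\}$, $b_j=a_j+\sum_{u+v=j,\ u,v\in\{1,\dots,j-1\}}a_ub_v$. Furthermore, $f$ is an involution (i.e. $f\circ f$ is the identity) if and only if $a_i=0$ for every $i\in\{1,2,\dots,\lfloor \ell/2\rfloor\}$.
   Context: For $x=(x_0,\dots,x_{n-1})\in\mathbb{F}_2^n$, indices of coordinates are taken modulo $n$. For a nonnegative integer $k$, the map $\theta_{m,k}\colon\mathbb{F}_2^n\to\mathbb{F}_2^n$ is defined by $\theta_{m,k}(x)=y$ with $y_i=x_{i+mk}\prod_{1\le j\le mk-1,\ m\nmid j}(x_{i+j}+1)$ for $i\in\{0,\dots,n-1\}$; $\theta_{m,0}$ is the identity map. Sums of maps are pointwise sums over $\mathbb{F}_2^n$; arithmetic on the coefficients is in $\mathbb{F}_2$. *)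

theory Defs
  imports "HOL-Library.Z2"
begin

text \<open>Vectors of F_2^n are represented as functions nat => bit; only the
coordinates 0..n-1 are meaningful, indices are reduced mod n.\<close>

definition vecs :: "nat \<Rightarrow> (nat \<Rightarrow> bit) set" where
  "vecs n = {x. \<forall>i\<ge>n. x i = 0}"

definition theta :: "nat \<Rightarrow> nat \<Rightarrow> nat \<Rightarrow> (nat \<Rightarrow> bit) \<Rightarrow> (nat \<Rightarrow> bit)" where
  "theta n m k x = (\<lambda>i. if i < n then
      x ((i + m * k) mod n) * (\<Prod>j\<in>{j. 1 \<le> j \<and> j \<le> m * k - 1 \<and> \<not> m dvd j}. x ((i + j) mod n) + 1)
    else 0)"

definition theta_comb :: "nat \<Rightarrow> nat \<Rightarrow> nat \<Rightarrow> (nat \<Rightarrow> bit) \<Rightarrow> (nat \<Rightarrow> bit) \<Rightarrow> (nat \<Rightarrow> bit)" where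
  "theta_comb n m l c x = (\<lambda>i. theta n m 0 x i + (\<Sum>k=1..l. c k * theta n m k x i))"

end

theory Submission
  imports Defs
begin

declare mult_bit_eq_and[simp del] add_bit_eq_xor[simp del]

lemma bit_add_self[simp]: "(x::bit) + x = 0" by (cases x) simp_all
lemma bit_mult_self[simp]: "(x::bit) * x = x" by (cases x) simp_all

definition U :: "nat \<Rightarrow> nat \<Rightarrow> nat set" where
  "U m k = {j. 1 \<le> j \<and> j \<le> m * k - 1 \<and> \<not> m dvd j}"

definition T :: "nat \<Rightarrow> nat \<Rightarrow> (nat \<Rightarrow> bit) \<Rightarrow> nat \<Rightarrow> bit" where
  "T m k X p = X (p + m * k) * (\<Prod>j\<in>U m k. X (p + j) + 1)"

definition ext :: "nat \<Rightarrow> (nat \<Rightarrow> bit) \<Rightarrow> nat \<Rightarrow> bit" where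
  "ext n x = (\<lambda>q. x (q mod n))"

definition F :: "nat \<Rightarrow> nat \<Rightarrow> (nat \<Rightarrow> bit) \<Rightarrow> (nat \<Rightarrow> bit) \<Rightarrow> nat \<Rightarrow> bit" where
  "F m L c X p = (\<Sum>k\<le>L. (c(0:=1)) k * T m k X p)"

lemma finite_U[simp]: "finite (U m k)"
  unfolding U_def by (rule finite_subset[of _ "{..m*k}"]) auto

lemma U0[simp]: "U m 0 = {}" unfolding U_def by auto

lemma T0[simp]: "T m 0 X p = X p" unfolding T_def by simp

lemma U_Suc: assumes "m \<ge> 1"
  shows "U m (Suc i) = {1..<m} \<union> (\<lambda>d. d + m) ` U m i"
proof (rule set_eqI, rule iffI)
  fix d assume d: "d \<in> U m (Suc i)"
  show "d \<in> {1..<m} \<union> (\<lambda>d. d + m) ` U m i"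
  proof (cases "d < m")
    case True then show ?thesis using d by (auto simp: U_def)
  next
    case False
    then have "d \<noteq> m" using d by (auto simp: U_def)
    with False have "m < d" by simp
    have "d - m \<in> U m i" using d \<open>m < d\<close>
      by (auto simp: U_def algebra_simps dvd_diff_nat) (metis dvd_add_triv_right_iff le_add_diff_inverse2 less_or_eq_imp_le)
    then have "d \<in> (\<lambda>d. d + m) ` U m i" using \<open>m < d\<close> by (intro image_eqI[of _ _ "d - m"]) auto
    then show ?thesis by blast
  qed
next
  fix d assume d: "d \<in> {1..<m} \<union> (\<lambda>d. d + m) ` U m i"
  then show "d \<in> U m (Suc i)"
  proof
    assume "d \<in> {1..<m}" then show ?thesis using assms by (auto simp: U_def dest: nat_dvd_not_less)
  next
    assume "d \<in> (\<lambda>d. d + m) ` U m i"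
    then obtain e where "e \<in> U m i" "d = e + m" by auto
    then show ?thesis by (auto simp: U_def algebra_simps)
  qed
qed

definition B :: "nat \<Rightarrow> (nat \<Rightarrow> bit) \<Rightarrow> nat \<Rightarrow> bit" where
  "B m X p = (\<Prod>d\<in>{1..<m}. X (p + d) + 1)"

lemma T_Suc: assumes "m \<ge> 1"
  shows "T m (Suc i) X p = B m X p * T m i X (p + m)"
proof -
  have disj: "{1..<m} \<inter> (\<lambda>d. d + m) ` U m i = {}" by auto
  have "(\<Prod>j\<in>U m (Suc i). X (p + j) + 1) = B m X p * (\<Prod>j\<in>(\<lambda>d. d + m) ` U m i. X (p + j) + 1)"
    unfolding U_Suc[OF assms] B_def by (rule prod.union_disjoint) (use disj in auto)
  also have "(\<Prod>j\<in>(\<lambda>d. d + m) ` U m i. X (p + j) + 1) = (\<Prod>j\<in>U m i. X (p + m + j) + 1)"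
    by (subst prod.reindex) (auto simp: inj_on_def algebra_simps)
  finally show ?thesis unfolding T_def by (simp add: algebra_simps)
qed

lemma bit_plus1_eq0[simp]: "(x::bit) + 1 = 0 \<longleftrightarrow> x = 1" by (cases x) simp_all

lemma T_nz: "T m k X p \<noteq> 0 \<longleftrightarrow> X (p + m * k) = 1 \<and> (\<forall>j\<in>U m k. X (p + j) = 0)"
  unfolding T_def by (auto simp: prod_zero_iff)

lemma block:
  assumes m: "m \<ge> 1" and nz: "T m s X (p + m) \<noteq> 0" and d: "1 \<le> d" "d < m" and k: "k \<ge> 1"
  shows "T m k X (p + d) = 0"
proof -
  from nz have X1: "X (p + m + m * s) = 1" and X0: "\<And>j. j \<in> U m s \<Longrightarrow> X (p + m + j) = 0"
    unfolding T_nz by auto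
  have ndvd: "\<not> m dvd d" using d by (auto dest: nat_dvd_not_less)
  show ?thesis
  proof (cases "k \<ge> s + 1")
    case True
    define e where "e = m * (s + 1) - d"
    have "m * (s+1) \<le> m * k" using True by (intro mult_le_mono2) simp
    moreover have "m \<le> m * (s+1)" by simp
    ultimately have e1: "1 \<le> e" "e \<le> m * k - 1" using d unfolding e_def by linarith+
    have "\<not> m dvd e"
    proof
      assume "m dvd e"
      moreover have "e + d = m * (s+1)" unfolding e_def using \<open>m \<le> m * (s+1)\<close> d by simp
      ultimately have "m dvd e + d" by (simp only:) simp
      with \<open>m dvd e\<close> have "m dvd d" using dvd_add_right_iff[of m e d] by blast
      then show False using ndvd by simp
    qed
    with e1 have eU: "e \<in> U m k" unfolding U_def by simp
    have "X (p + d + e) = 1" using X1 \<open>m \<le> m * (s+1)\<close> d unfolding e_def by (simp add: algebra_simps)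
    with eU have "\<not> (\<forall>j\<in>U m k. X (p + d + j) = 0)" by force
    then show ?thesis using T_nz[of m k X "p + d"] by auto
  next
    case False
    define e where "e = m * (k - 1) + d"
    have "m * (k - 1) + m = m * k" using k by (cases k) simp_all
    moreover have "m * k \<le> m * s" using False by (intro mult_le_mono2) simp
    ultimately have "m * (k - 1) + m \<le> m * s" by simp
    then have e1: "1 \<le> e" "e \<le> m * s - 1" using d unfolding e_def by linarith+
    have "\<not> m dvd e" unfolding e_def using ndvd by (simp add: dvd_add_right_iff)
    with e1 have "e \<in> U m s" unfolding U_def by simp
    then have "X (p + m + e) = 0" by (rule X0)
    moreover have "p + d + m * k = p + m + e" unfolding e_def using k
      by (cases k) (simp_all add: algebra_simps)
    ultimately have "X (p + d + m * k) = 0" by (metis add.assoc)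
    then show ?thesis using T_nz[of m k X "p + d"] by auto
  qed
qed


lemma sum_split0: "(\<Sum>k\<le>(L::nat). g k) = g 0 + (\<Sum>k=1..L. (g k :: 'a::comm_monoid_add))"
proof -
  have "{..L} = insert 0 {1..L}" by auto
  then show ?thesis by simp
qed

lemma F_block:
  assumes m: "m \<ge> 1" and nz: "T m s X (p + m) \<noteq> 0" and d: "1 \<le> d" "d < m"
  shows "F m L c X (p + d) = X (p + d)"
proof -
  have "(\<Sum>k=1..L. (c(0:=1)) k * T m k X (p + d)) = 0"
    using block[OF m nz d] by (intro sum.neutral) auto
  then show ?thesis unfolding F_def by (subst sum_split0) simp
qed

lemma key:
  assumes m: "m \<ge> 1"
  shows "T m i (F m L a X) p = (\<Sum>j\<le>L. (a(0:=1)) j * T m (i + j) X p)"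
proof (induction i arbitrary: p)
  case 0
  then show ?case by (simp add: F_def)
next
  case (Suc i)
  define S where "S = (\<Sum>j\<le>L. (a(0:=1)) j * T m (i + j) X (p + m))"
  have lhs: "T m (Suc i) (F m L a X) p = B m (F m L a X) p * S"
    unfolding T_Suc[OF m] Suc S_def ..
  have rhs: "(\<Sum>j\<le>L. (a(0:=1)) j * T m (Suc i + j) X p) = B m X p * S"
    unfolding S_def sum_distrib_left by (intro sum.cong refl) (simp add: T_Suc[OF m] mult_ac)
  have "B m (F m L a X) p * S = B m X p * S"
  proof (cases "S = 0")
    case False
    then obtain j where "(a(0:=1)) j * T m (i + j) X (p + m) \<noteq> 0"
      unfolding S_def by (meson sum.not_neutral_contains_not_neutral)
    then have nz: "T m (i + j) X (p + m) \<noteq> 0" by auto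
    have "B m (F m L a X) p = B m X p"
      unfolding B_def by (intro prod.cong refl) (simp add: F_block[OF m nz])
    then show ?thesis by simp
  qed simp
  then show ?case using lhs rhs by simp
qed


lemma theta_T: "theta n m k x i = (if i < n then T m k (ext n x) i else 0)"
  unfolding theta_def T_def U_def ext_def by simp

lemma theta_comb_F: "theta_comb n m L c x i = (if i < n then F m L c (ext n x) i else 0)"
proof (cases "i < n")
  case True
  then show ?thesis unfolding theta_comb_def F_def theta_T
    by (subst sum_split0) (simp add: atLeastAtMost_iff)
qed (simp add: theta_comb_def theta_T)

lemma ext_shift: "n \<ge> 1 \<Longrightarrow> ext n x (q mod n + c) = ext n x (q + c)"
  unfolding ext_def by (simp add: mod_add_left_eq)

lemma T_periodic: "n \<ge> 1 \<Longrightarrow> T m k (ext n x) (q mod n) = T m k (ext n x) q"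
  unfolding T_def by (simp add: ext_shift)

lemma F_periodic: "n \<ge> 1 \<Longrightarrow> F m L c (ext n x) (q mod n) = F m L c (ext n x) q"
  unfolding F_def by (simp add: T_periodic)

lemma ext_comb: "n \<ge> 1 \<Longrightarrow> ext n (theta_comb n m L c x) = F m L c (ext n x)"
proof
  fix q assume n: "n \<ge> 1"
  then have "q mod n < n" by simp
  then show "ext n (theta_comb n m L c x) q = F m L c (ext n x) q"
    unfolding ext_def[of n "theta_comb n m L c x"] theta_comb_F using F_periodic[OF n] by simp
qed

lemma vanish:
  assumes n: "n \<ge> 1" and m: "m \<ge> 1" and nd: "\<not> m dvd n" and s: "s > n div m"
  shows "T m s (ext n x) p = 0"
proof (rule ccontr)
  assume nz: "T m s (ext n x) p \<noteq> 0"
  have h1: "n mod m < m" using m by simp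
  have h2: "m * (n div m) + n mod m = n" by simp
  have "m * (n div m + 1) = m * (n div m) + m" by simp
  then have "n < m * (n div m + 1)" using h1 h2 by linarith
  also have "\<dots> \<le> m * s" using s by (intro mult_le_mono2) simp
  finally have lt: "n < m * s" .
  define d where "d = m * s - n"
  have d1: "1 \<le> d" "d \<le> m * s - 1" using lt n unfolding d_def by linarith+
  have "\<not> m dvd d"
  proof
    assume md: "m dvd d"
    have "d + n = m * s" using lt unfolding d_def by simp
    then have "m dvd d + n" by (metis dvd_triv_left)
    with md have "m dvd n" using dvd_add_right_iff[of m d n] by blast
    with nd show False by simp
  qed
  with d1 have dU: "d \<in> U m s" unfolding U_def by simp
  have eq: "ext n x (p + d) = ext n x (p + m * s)"
  proof -
    have "p + m * s = (p + d) + n" using lt unfolding d_def by simp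
    then show ?thesis unfolding ext_def by (simp only:) simp
  qed
  from nz have "ext n x (p + m * s) = 1" "ext n x (p + d) = 0" using dU unfolding T_nz by auto
  with eq show False by simp
qed

definition conv :: "(nat \<Rightarrow> bit) \<Rightarrow> (nat \<Rightarrow> bit) \<Rightarrow> nat \<Rightarrow> bit" where
  "conv c d s = (\<Sum>k\<le>s. (c(0:=1)) k * (d(0:=1)) (s - k))"

lemma conv0[simp]: "conv c d 0 = 1" unfolding conv_def by simp

lemma conv_split:
  assumes "s \<ge> 1"
  shows "conv c d s = d s + c s + (\<Sum>k=1..s-1. c k * d (s - k))"
proof -
  have set: "{..s} = insert 0 (insert s {1..s-1})" using assms by auto
  have mid: "(\<Sum>k=1..s-1. (c(0:=1)) k * (d(0:=1)) (s - k)) = (\<Sum>k=1..s-1. c k * d (s - k))"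
    by (intro sum.cong refl) auto
  show ?thesis unfolding conv_def set using assms mid by (simp add: add.assoc)
qed

lemma comp:
  assumes n: "n \<ge> 1" and m: "m \<ge> 1" and nd: "\<not> m dvd n"
  shows "F m (n div m) b (F m (n div m) a (ext n x)) p
       = (\<Sum>s\<le>n div m. conv b a s * T m s (ext n x) p)"
proof -
  define L where "L = n div m"
  define X where "X = ext n x"
  define G where "G = (\<lambda>k j. (b(0:=1)) k * ((a(0:=1)) j * T m (k + j) X p))"
  have "F m L b (F m L a X) p = (\<Sum>k\<le>L. \<Sum>j\<le>L. G k j)"
    unfolding F_def[of m L b] key[OF m] G_def sum_distrib_left ..
  also have "\<dots> = (\<Sum>(k,j)\<in>{..L} \<times> {..L}. G k j)"
    by (rule sum.cartesian_product)
  also have "\<dots> = (\<Sum>(k,j)\<in>{(k,j). k + j \<le> L}. G k j)"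
  proof (rule sum.mono_neutral_right)
    show "finite ({..L} \<times> {..L})" by simp
    show "{(k,j). k + j \<le> L} \<subseteq> {..L} \<times> {..L}" by auto
    show "\<forall>i\<in>{..L} \<times> {..L} - {(k,j). k + j \<le> L}. (case i of (k,j) \<Rightarrow> G k j) = 0"
    proof
      fix i assume i: "i \<in> {..L} \<times> {..L} - {(k,j). k + j \<le> L}"
      obtain k j where kj: "i = (k, j)" by fastforce
      with i have "k + j > n div m" unfolding L_def by auto
      then have "T m (k + j) X p = 0" unfolding X_def by (rule vanish[OF n m nd])
      then show "(case i of (k,j) \<Rightarrow> G k j) = 0" unfolding kj G_def by simp
    qed
  qed
  also have "\<dots> = (\<Sum>s\<le>L. \<Sum>i\<le>s. G i (s - i))"
    by (rule sum.triangle_reindex_eq)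
  also have "\<dots> = (\<Sum>s\<le>L. conv b a s * T m s X p)"
    unfolding conv_def sum_distrib_right G_def by (intro sum.cong refl) (simp add: mult_ac)
  finally show ?thesis unfolding L_def X_def .
qed


lemma bit_cancel1: "(x::bit) + (x + w) + w = 0" by (cases x; cases w) simp_all
lemma bit_cancel2: "((x::bit) + w) + x + w = 0" by (cases x; cases w) simp_all

lemma main_id:
  assumes n: "n \<ge> 1" and m: "m \<ge> 1" and nd: "\<not> m dvd n"
    and c0: "\<And>s. 1 \<le> s \<Longrightarrow> s \<le> n div m \<Longrightarrow> conv c d s = 0"
    and x: "x \<in> vecs n"
  shows "theta_comb n m (n div m) c (theta_comb n m (n div m) d x) = x"
proof
  fix i
  show "theta_comb n m (n div m) c (theta_comb n m (n div m) d x) i = x i"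
  proof (cases "i < n")
    case True
    have "theta_comb n m (n div m) c (theta_comb n m (n div m) d x) i
        = (\<Sum>s\<le>n div m. conv c d s * T m s (ext n x) i)"
      using True by (simp add: theta_comb_F[of n m _ c] ext_comb[OF n] comp[OF n m nd])
    also have "\<dots> = T m 0 (ext n x) i"
      by (subst sum_split0) (simp add: c0)
    also have "\<dots> = x i" using True by (simp add: ext_def)
    finally show ?thesis .
  next
    case False
    then show ?thesis using x by (simp add: theta_comb_F vecs_def)
  qed
qed

lemma T_witness:
  assumes m: "m \<ge> 1" and t: "m * t < n" and s: "m * s < n"
  shows "T m t (ext n (\<lambda>q. if q = m * s then 1 else 0)) 0 = (if t = s then 1 else 0)"
proof (cases "t = s")
  case True
  have "(\<Prod>j\<in>U m t. ext n (\<lambda>q. if q = m * s then 1 else 0) (0 + j) + 1) = 1"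
  proof (rule prod.neutral, rule ballI)
    fix j assume "j \<in> U m t"
    then have "j < m * s" "j < n" using True t s by (auto simp: U_def)
    then show "ext n (\<lambda>q. if q = m * s then 1 else 0) (0 + j) + 1 = 1" by (simp add: ext_def)
  qed
  then show ?thesis using True s unfolding T_def by (simp add: ext_def)
next
  case False
  then have "m * t \<noteq> m * s" using m by simp
  then show ?thesis using False t unfolding T_def by (simp add: ext_def)
qed

lemma conv_rev: "(\<Sum>k=1..(s::nat)-1. c k * (d::nat\<Rightarrow>bit) (s - k)) = (\<Sum>k=1..s-1. d k * c (s - k))"
proof -
  have "(\<Sum>k=1..s-1. c k * d (s - k)) = (\<Sum>k=1..s-1. c (s - 1 + 1 - k) * d (s - (s - 1 + 1 - k)))"
    by (rule sum.atLeastAtMost_rev)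
  also have "\<dots> = (\<Sum>k=1..s-1. d k * c (s - k))"
    by (intro sum.cong refl) (auto intro: mult.commute)
  finally show ?thesis .
qed

theorem proposition1:
  fixes n m :: nat and a b :: "nat \<Rightarrow> bit"
  assumes "n \<ge> 1" and "m \<ge> 2" and "\<not> m dvd n"
    and "b 1 = a 1"
    and "\<And>j. 2 \<le> j \<Longrightarrow> j \<le> n div m \<Longrightarrow>
           b j = a j + (\<Sum>u=1..j-1. a u * b (j - u))"
  shows "(\<forall>x\<in>vecs n. theta_comb n m (n div m) b (theta_comb n m (n div m) a x) = x
              \<and> theta_comb n m (n div m) a (theta_comb n m (n div m) b x) = x)
    \<and> ((\<forall>x\<in>vecs n. theta_comb n m (n div m) a (theta_comb n m (n div m) a x) = x)
         \<longleftrightarrow> (\<forall>i\<in>{1..(n div m) div 2}. a i = 0))"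
proof -
  note n = assms(1) and nd = assms(3)
  have m: "m \<ge> 1" using assms(2) by simp
  define L where "L = n div m"
  have hb: "b s = a s + (\<Sum>u=1..s-1. a u * b (s - u))" if "1 \<le> s" "s \<le> L" for s
  proof (cases "s = 1")
    case True then show ?thesis using assms(4) by simp
  next
    case False then show ?thesis using that assms(5)[of s] unfolding L_def by simp
  qed
  have c1: "conv b a s = 0" if "1 \<le> s" "s \<le> L" for s
    using conv_split[OF that(1), of b a] hb[OF that] conv_rev[of b a s] bit_cancel1 by simp
  have c2: "conv a b s = 0" if "1 \<le> s" "s \<le> L" for s
    using conv_split[OF that(1), of a b] hb[OF that] bit_cancel2 by simp
  have part1: "\<forall>x\<in>vecs n. theta_comb n m (n div m) b (theta_comb n m (n div m) a x) = x
              \<and> theta_comb n m (n div m) a (theta_comb n m (n div m) b x) = x"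
    using main_id[OF n m nd, of b a] main_id[OF n m nd, of a b] c1 c2 unfolding L_def by blast
  have mL: "m * L < n"
  proof -
    have "m * L \<le> n" unfolding L_def by simp
    moreover have "m * L \<noteq> n" using nd unfolding L_def by (metis dvd_triv_left)
    ultimately show ?thesis by simp
  qed
  have part2: "(\<forall>x\<in>vecs n. theta_comb n m L a (theta_comb n m L a x) = x)
         \<longleftrightarrow> (\<forall>i\<in>{1..L div 2}. a i = 0)"
  proof
    assume H: "\<forall>x\<in>vecs n. theta_comb n m L a (theta_comb n m L a x) = x"
    have W: "conv a a s = 0" if s1: "1 \<le> s" and sL: "s \<le> L" for s
    proof -
      define x :: "nat \<Rightarrow> bit" where "x = (\<lambda>q. if q = m * s then 1 else 0)"
      have ms: "m * s < n" using mL sL by (meson le_less_trans mult_le_mono2)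
      have xv: "x \<in> vecs n" using ms unfolding x_def vecs_def by auto
      have "theta_comb n m L a (theta_comb n m L a x) 0 = x 0" using H xv by simp
      also have "x 0 = 0" using m s1 unfolding x_def by simp
      finally have z: "theta_comb n m L a (theta_comb n m L a x) 0 = 0" .
      have "theta_comb n m L a (theta_comb n m L a x) 0
          = (\<Sum>t\<le>L. conv a a t * T m t (ext n x) 0)"
        using n unfolding L_def by (simp add: theta_comb_F[of n m _ a] ext_comb[OF n] comp[OF n m nd])
      also have "\<dots> = (\<Sum>t\<le>L. if t = s then conv a a t else 0)"
      proof (intro sum.cong refl)
        fix t assume "t \<in> {..L}"
        then have "m * t < n" using mL by (meson atMost_iff le_less_trans mult_le_mono2)
        then show "conv a a t * T m t (ext n x) 0 = (if t = s then conv a a t else 0)"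
          unfolding x_def using T_witness[OF m _ ms] by simp
      qed
      also have "\<dots> = conv a a s" using sL by simp
      finally show ?thesis using z by simp
    qed
    have "\<forall>i. 1 \<le> i \<longrightarrow> i \<le> L div 2 \<longrightarrow> a i = 0"
    proof (rule allI)
      fix i show "1 \<le> i \<longrightarrow> i \<le> L div 2 \<longrightarrow> a i = 0"
      proof (induction i rule: less_induct)
        case (less i)
        show ?case
        proof (intro impI)
          assume i1: "1 \<le> i" and iL: "i \<le> L div 2"
          have s1: "1 \<le> 2 * i" "2 * i \<le> L" using i1 iL by auto
          have rest: "(\<Sum>k\<in>{1..2*i-1} - {i}. a k * a (2 * i - k)) = 0"
          proof (rule sum.neutral, rule ballI)
            fix k assume k: "k \<in> {1..2*i-1} - {i}"
            show "a k * a (2 * i - k) = 0"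
            proof (cases "k < i")
              case True
              then have "a k = 0" using less.IH[of k] k iL by auto
              then show ?thesis by simp
            next
              case False
              then have "2 * i - k < i" "1 \<le> 2 * i - k" using k by auto
              then have "a (2 * i - k) = 0" using less.IH[of "2 * i - k"] iL by auto
              then show ?thesis by simp
            qed
          qed
          have "i \<in> {1..2*i-1}" using i1 by auto
          then have "(\<Sum>k=1..2*i-1. a k * a (2 * i - k)) = a i * a (2 * i - i) + 0"
            using rest by (simp add: sum.remove)
          then have "(\<Sum>k=1..2*i-1. a k * a (2 * i - k)) = a i" by simp
          then have "conv a a (2 * i) = a i"
            using conv_split[OF s1(1), of a a] by (simp add: add.assoc[symmetric])
          then show "a i = 0" using W[OF s1] by simp
        qed
      qed
    qed
    then show "\<forall>i\<in>{1..L div 2}. a i = 0" by auto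
  next
    assume A: "\<forall>i\<in>{1..L div 2}. a i = 0"
    have "conv a a s = 0" if s1: "1 \<le> s" and sL: "s \<le> L" for s
    proof -
      have "(\<Sum>k=1..s-1. a k * a (s - k)) = 0"
      proof (rule sum.neutral, rule ballI)
        fix k assume k: "k \<in> {1..s-1}"
        show "a k * a (s - k) = 0"
        proof (cases "k \<le> s - k")
          case True
          then have "a k = 0" using A k sL by auto
          then show ?thesis by simp
        next
          case False
          then have "1 \<le> s - k" "2 * (s - k) \<le> L" using k sL by auto
          then have "s - k \<in> {1..L div 2}" by auto
          then have "a (s - k) = 0" using A by auto
          then show ?thesis by simp
        qed
      qed
      then show ?thesis using conv_split[OF s1, of a a] by simp
    qed
    then show "\<forall>x\<in>vecs n. theta_comb n m L a (theta_comb n m L a x) = x"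
      using main_id[OF n m nd, of a a] unfolding L_def by blast
  qed
  show ?thesis using part1 part2 unfolding L_def by blast
qed

end
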